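(* Let $M\ge 2$ and $0<p_1<p_2<\cdots<p_M$. For $i=1,\dots,M$ define the linear functions $\eta_i(c)=p_i c+\log p_i$ of $c\in\mathbb R$, and for $i\ne j$ let $c_{i,j}=-(\log p_i-\log p_j)/(p_i-p_j)$, so that $\eta_i(c_{i,j})=\eta_j(c_{i,j})$. For $i<j$ define the level of intersection $$\sigma_{i,j}=\big|\{\,l\in\{1,\dots,M\}:\ \eta_l(c_{i,j})<\eta_i(c_{i,j})=\eta_j(c_{i,j})\,\}\big|,$$ and for $s\ge 0$ let $I(s)=\{(i,j):\ 1\le i<j\le M,\ \sigma_{i,j}=s\}$. Then for every $0\le s\le M-2$, $$I(s)=\{(i,\,M-s+i-1):\ i=1,\dots,s+1\}.$$ *)

theory Defs
  imports Complex_Main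
begin

definition eta :: "(nat \<Rightarrow> real) \<Rightarrow> nat \<Rightarrow> real \<Rightarrow> real" where
  "eta p i c = p i * c + ln (p i)"

definition cint :: "(nat \<Rightarrow> real) \<Rightarrow> nat \<Rightarrow> nat \<Rightarrow> real" where
  "cint p i j = - (ln (p i) - ln (p j)) / (p i - p j)"

definition sigma :: "(nat \<Rightarrow> real) \<Rightarrow> nat \<Rightarrow> nat \<Rightarrow> nat \<Rightarrow> nat" where
  "sigma p M i j = card {l \<in> {1..M}. eta p l (cint p i j) < eta p i (cint p i j)
                                     \<and> eta p i (cint p i j) = eta p j (cint p i j)}"

definition Ilev :: "(nat \<Rightarrow> real) \<Rightarrow> nat \<Rightarrow> nat \<Rightarrow> (nat \<times> nat) set" where
  "Ilev p M s = {(i, j). 1 \<le> i \<and> i < j \<and> j \<le> M \<and> sigma p M i j = s}"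

end

theory Submission
  imports Defs
begin

lemma ln_strict: "0 < (x::real) \<Longrightarrow> x \<noteq> 1 \<Longrightarrow> ln x < x - 1"
  using ln_le_minus_one[of x] ln_eq_minus_one[of x] by force

lemma conc:
  fixes a b d :: real
  assumes "0 < a" "a < b" "b < d"
  shows "(d - a) * ln b > (d - b) * ln a + (b - a) * ln d"
proof -
  have b: "b > 0" using assms by simp
  have h1: "ln (a/b) < a/b - 1" using ln_strict[of "a/b"] assms by auto
  have h2: "ln (d/b) < d/b - 1" using ln_strict[of "d/b"] assms by auto
  have e1: "ln (a/b) = ln a - ln b" using assms b by (simp add: ln_div)
  have e2: "ln (d/b) = ln d - ln b" using assms b by (simp add: ln_div)
  have "ln b - ln a > (b - a)/b" using h1 e1 b by (simp add: field_simps)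
  hence A: "(d - b) * (ln b - ln a) > (d - b) * ((b - a)/b)" using assms by (intro mult_strict_left_mono) auto
  have "ln d - ln b < (d - b)/b" using h2 e2 b by (simp add: field_simps)
  hence B: "(b - a) * (ln d - ln b) < (b - a) * ((d - b)/b)" using assms by (intro mult_strict_left_mono) auto
  have "(d - b) * ((b - a)/b) = (b - a) * ((d - b)/b)" by simp
  with A B show ?thesis by (simp add: algebra_simps)
qed

lemma concg:
  fixes a b d c k :: real
  assumes "0 < a" "a < b" "b < d"
  defines "f \<equiv> \<lambda>x. x * c + ln x + k"
  shows "(d - a) * f b > (d - b) * f a + (b - a) * f d"
proof -
  have "(d - a) * (b * c + k) = (d - b) * (a * c + k) + (b - a) * (d * c + k)"
    by (simp add: algebra_simps)
  with conc[OF assms(1-3)] show ?thesis unfolding f_def by (simp add: algebra_simps)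
qed

lemma mono_p:
  fixes p :: "nat \<Rightarrow> real"
  assumes "\<And>i. 1 \<le> i \<Longrightarrow> i < M \<Longrightarrow> p i < p (Suc i)"
  shows "1 \<le> l \<Longrightarrow> l < m \<Longrightarrow> m \<le> M \<Longrightarrow> p l < p m"
proof (induction m)
  case 0 then show ?case by simp
next
  case (Suc m)
  show ?case
  proof (cases "l = m")
    case True then show ?thesis using assms Suc.prems by simp
  next
    case False
    then have "p l < p m" using Suc by simp
    also have "p m < p (Suc m)" using assms Suc.prems False by simp
    finally show ?thesis .
  qed
qed

lemma sigma_val:
  fixes p :: "nat \<Rightarrow> real"
  assumes pos: "0 < p 1"
    and mono: "\<And>i. 1 \<le> i \<Longrightarrow> i < M \<Longrightarrow> p i < p (Suc i)"
    and ij: "1 \<le> i" "i < j" "j \<le> M"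
  shows "sigma p M i j = (i - 1) + (M - j)"
proof -
  have lt: "\<And>l m. 1 \<le> l \<Longrightarrow> l < m \<Longrightarrow> m \<le> M \<Longrightarrow> p l < p m"
    using mono_p[of M p] mono by blast
  have ppos: "\<And>l. 1 \<le> l \<Longrightarrow> l \<le> M \<Longrightarrow> 0 < p l"
  proof -
    fix l :: nat assume "1 \<le> l" "l \<le> M"
    then show "0 < p l" using pos lt[of 1 l] by (cases "l = 1") auto
  qed
  define c where "c = cint p i j"
  define f where "f = (\<lambda>x. x * c + ln x + (- (p i * c + ln (p i))))"
  have pij: "p i < p j" using lt ij by simp
  have pi0: "0 < p i" using ppos ij by simp
  have pj0: "0 < p j" using ppos ij by simp
  have eq: "eta p i c = eta p j c"
  proof -
    have "p i - p j \<noteq> 0" using pij by simp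
    then show ?thesis unfolding eta_def c_def cint_def by (simp add: field_simps)
  qed
  have ef: "\<And>l. eta p l c < eta p i c \<longleftrightarrow> f (p l) < 0"
    unfolding f_def eta_def by (auto simp: algebra_simps)
  have fi: "f (p i) = 0" unfolding f_def by simp
  have fj: "f (p j) = 0" using eq unfolding f_def eta_def by (simp add: algebra_simps)
  have S: "{l \<in> {1..M}. eta p l (cint p i j) < eta p i (cint p i j)
              \<and> eta p i (cint p i j) = eta p j (cint p i j)} = {1..<i} \<union> {j<..M}"
  proof (rule set_eqI, rule iffI)
    fix l assume l: "l \<in> {l \<in> {1..M}. eta p l (cint p i j) < eta p i (cint p i j)
              \<and> eta p i (cint p i j) = eta p j (cint p i j)}"
    then have l1: "1 \<le> l" "l \<le> M" and fl: "f (p l) < 0" using ef unfolding c_def by auto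
    show "l \<in> {1..<i} \<union> {j<..M}"
    proof (rule ccontr)
      assume "l \<notin> {1..<i} \<union> {j<..M}"
      then have "i \<le> l" "l \<le> j" using l1 by auto
      moreover have "l \<noteq> i" "l \<noteq> j" using fl fi fj by auto
      ultimately have "i < l" "l < j" by auto
      then have "p i < p l" "p l < p j" using lt ij l1 by auto
      from concg[OF pi0 this, of c "- (p i * c + ln (p i))"]
      have "(p j - p i) * f (p l) > 0" using fi fj unfolding f_def by simp
      then have "f (p l) > 0" using pij by (simp add: zero_less_mult_iff)
      with fl show False by simp
    qed
  next
    fix l assume l: "l \<in> {1..<i} \<union> {j<..M}"
    then have l1: "1 \<le> l" "l \<le> M" using ij by auto
    have "f (p l) < 0"
    proof (cases "l < i")
      case True
      then have a: "p l < p i" using lt l1 ij by auto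
      have pl0: "0 < p l" using ppos l1 by auto
      from concg[OF pl0 a pij, of c "- (p i * c + ln (p i))"]
      have "(p j - p l) * f (p i) > (p j - p i) * f (p l)" using fj unfolding f_def by simp
      then have "(p j - p i) * f (p l) < 0" using fi by simp
      then show ?thesis using pij by (simp add: mult_less_0_iff)
    next
      case False
      then have "j < l" using l by auto
      then have a: "p j < p l" using lt l1 ij by auto
      from concg[OF pi0 pij a, of c "- (p i * c + ln (p i))"]
      have "(p l - p i) * f (p j) > (p l - p j) * f (p i) + (p j - p i) * f (p l)"
        unfolding f_def by simp
      then have "(p j - p i) * f (p l) < 0" using fi fj by simp
      then show ?thesis using pij by (simp add: mult_less_0_iff)
    qed
    then show "l \<in> {l \<in> {1..M}. eta p l (cint p i j) < eta p i (cint p i j)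
              \<and> eta p i (cint p i j) = eta p j (cint p i j)}"
      using ef eq l1 unfolding c_def by auto
  qed
  have "card ({1..<i} \<union> {j<..M}) = card {1..<i} + card {j<..M}"
    by (rule card_Un_disjoint) (use ij in auto)
  then show ?thesis unfolding sigma_def S by simp
qed

theorem lemma2:
  fixes p :: "nat \<Rightarrow> real" and M s :: nat
  assumes "M \<ge> 2"
    and "0 < p 1"
    and "\<And>i. 1 \<le> i \<Longrightarrow> i < M \<Longrightarrow> p i < p (Suc i)"
    and "s \<le> M - 2"
  shows "Ilev p M s = {(i, M - s + i - 1) | i. 1 \<le> i \<and> i \<le> s + 1}"
proof (rule set_eqI)
  fix x :: "nat \<times> nat"
  obtain i j where x: "x = (i, j)" by (cases x)
  have "x \<in> Ilev p M s \<longleftrightarrow> 1 \<le> i \<and> i < j \<and> j \<le> M \<and> (i - 1) + (M - j) = s"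
  proof -
    have "1 \<le> i \<and> i < j \<and> j \<le> M \<Longrightarrow> sigma p M i j = (i - 1) + (M - j)"
      using sigma_val[where p=p and M=M and i=i and j=j] assms(2,3) by blast
    then show ?thesis unfolding x Ilev_def by auto
  qed
  also have "\<dots> \<longleftrightarrow> x \<in> {(i, M - s + i - 1) | i. 1 \<le> i \<and> i \<le> s + 1}"
    unfolding x using assms(1,4) by auto
  finally show "x \<in> Ilev p M s \<longleftrightarrow> x \<in> {(i, M - s + i - 1) | i. 1 \<le> i \<and> i \<le> s + 1}" .
qed

end
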